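(* Let $m\geq 4$, let $\mathcal{S}$ be a locating-dominating set of the grid graph $G_{2,m}=P_2\square P_m$, and let $\mathcal{B}$ be a $(2\times 4)$-block of $G_{2,m}$. Then $|\mathcal{B}\cap\mathcal{S}|\geq 2$.
   Context: $P_n$ is the path on $n$ vertices, $\square$ the Cartesian product of graphs, and $G_{n,m}=P_n\square P_m$ is viewed as a grid with $n$ rows and $m$ columns. A $(n\times \ell)$-block of $G_{n,m}$ ($1\le\ell\le m$) is the induced subgraph (or its vertex set) consisting of $\ell$ consecutive columns. For $C\subseteq V(G)$ and $v\in V(G)$ let $I(v)=N[v]\cap C$ ($N[v]$ the closed neighborhood). $C$ is a locating-dominating set if $I(v)\neq\emptyset$ for all $v\in V(G)\setminus C$ and $I(u)\neq I(v)$ for all distinct $u,v\in V(G)\setminus C$. *)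

theory Defs
  imports Main
begin

text \<open>Grid graph G_{n,m} = P_n \<box> P_m: vertices (i,j) with 1 \<le> i \<le> n (row), 1 \<le> j \<le> m (column).\<close>

definition grid_vertices :: "nat \<Rightarrow> nat \<Rightarrow> (nat \<times> nat) set" where
  "grid_vertices n m = {1..n} \<times> {1..m}"

definition grid_adj :: "nat \<times> nat \<Rightarrow> nat \<times> nat \<Rightarrow> bool" where
  "grid_adj u v \<longleftrightarrow>
     (fst u = fst v \<and> (snd u = snd v + 1 \<or> snd v = snd u + 1)) \<or>
     (snd u = snd v \<and> (fst u = fst v + 1 \<or> fst v = fst u + 1))"

definition grid_closed_nbhd :: "nat \<Rightarrow> nat \<Rightarrow> nat \<times> nat \<Rightarrow> (nat \<times> nat) set" where
  "grid_closed_nbhd n m v = {u \<in> grid_vertices n m. u = v \<or> grid_adj v u}"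

definition locating_dominating :: "nat \<Rightarrow> nat \<Rightarrow> (nat \<times> nat) set \<Rightarrow> bool" where
  "locating_dominating n m C \<longleftrightarrow>
     C \<subseteq> grid_vertices n m \<and>
     (\<forall>v \<in> grid_vertices n m - C. grid_closed_nbhd n m v \<inter> C \<noteq> {}) \<and>
     (\<forall>u \<in> grid_vertices n m - C. \<forall>v \<in> grid_vertices n m - C.
        u \<noteq> v \<longrightarrow> grid_closed_nbhd n m u \<inter> C \<noteq> grid_closed_nbhd n m v \<inter> C)"

text \<open>The (n \<times> l)-block consisting of columns j, ..., j+l-1 (requires 1 \<le> j, j+l-1 \<le> m).\<close>
definition grid_block :: "nat \<Rightarrow> nat \<Rightarrow> nat \<Rightarrow> (nat \<times> nat) set" where
  "grid_block n j l = {1..n} \<times> {j..<j+l}"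

end

theory Submission
  imports Defs
begin
lemma nb_sub:
  assumes "1 \<le> j" and "a \<in> {1,2::nat}" and "b \<in> {j+1, j+2}"
  shows "grid_closed_nbhd 2 m (a,b) \<subseteq> grid_block 2 j 4"
proof
  fix x assume "x \<in> grid_closed_nbhd 2 m (a,b)"
  then obtain p q where x: "x = (p,q)" "p \<in> {1..2}" "p = a \<and> q = b \<or> grid_adj (a,b) (p,q)"
    unfolding grid_closed_nbhd_def grid_vertices_def by (cases x) auto
  have "q \<ge> j \<and> q < j + 4" using x(3) assms(3) unfolding grid_adj_def by auto
  then show "x \<in> grid_block 2 j 4" using x unfolding grid_block_def by auto
qed

lemma key:
  assumes ld: "locating_dominating 2 m S" and j: "1 \<le> j" "j + 3 \<le> m"
    and sub: "grid_block 2 j 4 \<inter> S \<subseteq> {s}"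
    and u: "u \<in> {(1,j+1),(2,j+1),(1,j+2),(2,j+2)}" "u \<noteq> s"
  shows "u \<notin> S \<and> u \<in> grid_vertices 2 m \<and> grid_closed_nbhd 2 m u \<inter> S = {s}"
proof -
  obtain a b where ab: "u = (a,b)" "a \<in> {1,2}" "b \<in> {j+1,j+2}" using u by auto
  have ub: "u \<in> grid_block 2 j 4" using ab unfolding grid_block_def by auto
  have uv: "u \<in> grid_vertices 2 m" using ab j unfolding grid_vertices_def by auto
  have nS: "u \<notin> S" using ub sub u(2) by blast
  have "grid_closed_nbhd 2 m u \<inter> S \<subseteq> {s}"
    using nb_sub[OF j(1) ab(2,3), of m] ab(1) sub by blast
  moreover have "grid_closed_nbhd 2 m u \<inter> S \<noteq> {}"
    using ld nS uv unfolding locating_dominating_def by blast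
  ultimately show ?thesis using nS uv by blast
qed

theorem lemma4p3:
  fixes m j :: nat and S :: "(nat \<times> nat) set"
  assumes "m \<ge> 4"
    and "locating_dominating 2 m S"
    and "1 \<le> j" and "j + 3 \<le> m"
  shows "card (grid_block 2 j 4 \<inter> S) \<ge> 2"
proof (rule ccontr)
  assume "\<not> ?thesis"
  hence c: "card (grid_block 2 j 4 \<inter> S) \<le> 1" by simp
  have fin: "finite (grid_block 2 j 4 \<inter> S)" unfolding grid_block_def by simp
  obtain s where sub: "grid_block 2 j 4 \<inter> S \<subseteq> {s}"
  proof (cases "grid_block 2 j 4 \<inter> S = {}")
    case True then show ?thesis using that by blast
  next
    case False
    then obtain x where x: "x \<in> grid_block 2 j 4 \<inter> S" by blast
    have "\<forall>y\<in>grid_block 2 j 4 \<inter> S. \<forall>z\<in>grid_block 2 j 4 \<inter> S. y = z"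
      using c fin card_le_Suc0_iff_eq[of "grid_block 2 j 4 \<inter> S"] by (simp del: Int_iff)
    then have "grid_block 2 j 4 \<inter> S \<subseteq> {x}" using x by blast
    then show ?thesis using that by blast
  qed
  obtain u v where uv: "u \<in> {(1,j+1),(2,j+1),(1,j+2),(2,j+2)}" "u \<noteq> s"
      "v \<in> {(1,j+1),(2,j+1),(1,j+2),(2,j+2)}" "v \<noteq> s" "u \<noteq> v"
  proof (cases "s = (1,j+1) \<or> s = (2,j+1)")
    case True
    show ?thesis by (rule that[of "(1,j+2)" "(2,j+2)"]) (use True in auto)
  next
    case False
    show ?thesis by (rule that[of "(1,j+1)" "(2,j+1)"]) (use False in auto)
  qed
  have ku: "u \<notin> S" "u \<in> grid_vertices 2 m" "grid_closed_nbhd 2 m u \<inter> S = {s}"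
    using key[OF assms(2) assms(3) assms(4) sub uv(1,2)] by auto
  have kv: "v \<notin> S" "v \<in> grid_vertices 2 m" "grid_closed_nbhd 2 m v \<inter> S = {s}"
    using key[OF assms(2) assms(3) assms(4) sub uv(3,4)] by auto
  have "grid_closed_nbhd 2 m u \<inter> S \<noteq> grid_closed_nbhd 2 m v \<inter> S"
    using assms(2) ku(1,2) kv(1,2) uv(5) unfolding locating_dominating_def by blast
  then show False using ku(3) kv(3) by simp
qed

end
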